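(* Let $\mathcal T$ be a transducer with $n\ge1$ states. The following are equivalent: (1) $\mathcal T$ is not zero-avoiding (with any bound $k\in\mathbb N_0$); (2) $\mathcal T$ has a computation $P$ with $d_{max}(P)\ge n$ and $d(P)=0$; (3) $\mathcal T$ has a computation $P$ of the form $P=BC_1AC_2D$, for some paths $B,C_1,A,C_2,D$, where $C_1,C_2$ are cycles with $d(C_1)\,d(C_2)<0$.
   Context: A transducer is a quintuple $\mathcal T=(Q,\Sigma,E,I,F)$ with finite state set $Q$, finite alphabet $\Sigma$, finite transition set $E\subseteq Q\times\{x/y : x,y\in\Sigma\cup\{\lambda\}\}\times Q$ ($\lambda$ the empty word), nonempty initial set $I\subseteq Q$, final set $F\subseteq Q$. A path is a finite sequence of consecutive transitions; its label $x_1\cdots x_\ell/y_1\cdots y_\ell$ is formed by concatenating input parts and output parts. A cycle is a path whose first and last states coincide. A computation is a path that is empty or starts at an initial state. For a path $P$ with label $u/v$, $d(P)=|u|-|v|$, and $d_{max}(P)=\max\{|d(Q)| : Q\text{ a prefix of }P\}$ (prefixes being initial segments of transitions, including the empty path). $\mathcal T$ is zero-avoiding with bound $k\in\mathbb N_0$ if for every computation $P$ of $\mathcal T$, $d_{max}(P)>k$ implies $d(P)\neq0$; $\mathcal T$ is zero-avoiding if it is zero-avoiding with some bound $k\in\mathbb N_0$. *)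

theory Defs
  imports Main
begin

text \<open>A transition is (source, input letter or empty word, output letter or empty word, target).
  The empty word lambda is represented by None.\<close>
type_synonym ('q, 'a) trans = "'q \<times> 'a option \<times> 'a option \<times> 'q"

definition src :: "('q, 'a) trans \<Rightarrow> 'q" where
  "src t = fst t"
definition inp :: "('q, 'a) trans \<Rightarrow> 'a option" where
  "inp t = fst (snd t)"
definition outp :: "('q, 'a) trans \<Rightarrow> 'a option" where
  "outp t = fst (snd (snd t))"
definition tgt :: "('q, 'a) trans \<Rightarrow> 'q" where
  "tgt t = snd (snd (snd t))"

definition transducer ::
  "'q set \<Rightarrow> 'a set \<Rightarrow> ('q, 'a) trans set \<Rightarrow> 'q set \<Rightarrow> 'q set \<Rightarrow> bool" where
  "transducer Q \<Sigma> E I F \<longleftrightarrow>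
     finite Q \<and> finite \<Sigma> \<and> finite E \<and>
     (\<forall>t\<in>E. src t \<in> Q \<and> tgt t \<in> Q \<and> set_option (inp t) \<subseteq> \<Sigma> \<and> set_option (outp t) \<subseteq> \<Sigma>) \<and>
     I \<noteq> {} \<and> I \<subseteq> Q \<and> F \<subseteq> Q"

definition is_path :: "('q, 'a) trans set \<Rightarrow> ('q, 'a) trans list \<Rightarrow> bool" where
  "is_path E P \<longleftrightarrow> set P \<subseteq> E \<and> (\<forall>i. Suc i < length P \<longrightarrow> tgt (P ! i) = src (P ! Suc i))"

definition is_cycle :: "('q, 'a) trans set \<Rightarrow> ('q, 'a) trans list \<Rightarrow> bool" where
  "is_cycle E P \<longleftrightarrow> is_path E P \<and> P \<noteq> [] \<and> src (hd P) = tgt (last P)"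

definition computation ::
  "('q, 'a) trans set \<Rightarrow> 'q set \<Rightarrow> ('q, 'a) trans list \<Rightarrow> bool" where
  "computation E I P \<longleftrightarrow> is_path E P \<and> (P = [] \<or> src (hd P) \<in> I)"

definition dd :: "('q, 'a) trans list \<Rightarrow> int" where
  "dd P = int (length (concat (map (\<lambda>t. case inp t of None \<Rightarrow> [] | Some x \<Rightarrow> [x]) P)))
        - int (length (concat (map (\<lambda>t. case outp t of None \<Rightarrow> [] | Some y \<Rightarrow> [y]) P)))"

definition dmax :: "('q, 'a) trans list \<Rightarrow> int" where
  "dmax P = Max ((\<lambda>i. \<bar>dd (take i P)\<bar>) ` {0..length P})"

definition zero_avoiding_with_bound ::
  "('q, 'a) trans set \<Rightarrow> 'q set \<Rightarrow> nat \<Rightarrow> bool" where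
  "zero_avoiding_with_bound E I k \<longleftrightarrow>
     (\<forall>P. computation E I P \<longrightarrow> dmax P > int k \<longrightarrow> dd P \<noteq> 0)"

definition zero_avoiding :: "('q, 'a) trans set \<Rightarrow> 'q set \<Rightarrow> bool" where
  "zero_avoiding E I \<longleftrightarrow> (\<exists>k. zero_avoiding_with_bound E I k)"

end

theory Submission
  imports Defs
begin

lemma up_cycle:
  fixes h :: "nat \<Rightarrow> int" and st :: "nat \<Rightarrow> 'q"
  assumes step: "\<forall>i<j. \<bar>h (Suc i) - h i\<bar> \<le> 1" and h0: "h 0 = 0" and hj: "h j \<ge> int n"
    and stQ: "st ` {0..j} \<subseteq> Q" and fQ: "finite Q" and cQ: "card Q = n"
  shows "\<exists>a b. a < b \<and> b \<le> j \<and> st a = st b \<and> h a < h b"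
proof -
  define pos where "pos l = (GREATEST i. i \<le> j \<and> h i = int l)" for l :: nat
  have ivt: "\<exists>i\<ge>m. i \<le> j \<and> h i = k" if "m \<le> j" "h m \<le> k" "k \<le> h j" for m k
    using nat_intermed_int_val[of m j h k] step that by auto
  have P: "pos l \<le> j \<and> h (pos l) = int l" if "l \<le> n" for l
  proof -
    have "int l \<le> h j" using that hj by linarith
    then obtain i where "i \<le> j" "h i = int l" using ivt[of 0 "int l"] h0 by auto
    then show ?thesis unfolding pos_def using GreatestI_nat[of "\<lambda>i. i \<le> j \<and> h i = int l" i j] by auto
  qed
  have mono: "pos l < pos l'" if lt: "l < l'" and le: "l' \<le> n" for l l'
  proof (rule ccontr)
    assume "\<not> pos l < pos l'"
    have a: "pos l \<le> j" "h (pos l) = int l" using P lt le by auto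
    obtain i where i: "i \<ge> pos l" "i \<le> j" "h i = int l'"
    proof -
      have "h (pos l) \<le> int l'" "int l' \<le> h j" using a lt le hj by auto
      then show ?thesis using ivt[of "pos l" "int l'"] a that by blast
    qed
    have "i \<le> pos l'" unfolding pos_def using i Greatest_le_nat[of "\<lambda>i. i \<le> j \<and> h i = int l'" i j] by auto
    moreover have "i \<noteq> pos l" using i a lt by auto
    ultimately show False using \<open>\<not> pos l < pos l'\<close> i by auto
  qed
  have "\<not> inj_on (st \<circ> pos) {0..n}"
  proof
    assume inj: "inj_on (st \<circ> pos) {0..n}"
    have "(st \<circ> pos) ` {0..n} \<subseteq> Q" using stQ P by auto
    from card_inj_on_le[OF inj this fQ] cQ show False by simp
  qed
  then obtain l l' where ll: "l \<le> n" "l' \<le> n" "l \<noteq> l'" "st (pos l) = st (pos l')"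
    unfolding inj_on_def by auto
  then obtain a b where ab: "a < b" "b \<le> n" "st (pos a) = st (pos b)"
    by (metis linorder_neq_iff)
  show ?thesis
    apply (rule exI[of _ "pos a"], rule exI[of _ "pos b"])
    using mono[OF ab(1,2)] P[of a] P[of b] ab by auto
qed

lemma down_cycle:
  fixes h :: "nat \<Rightarrow> int" and st :: "nat \<Rightarrow> 'q"
  assumes step: "\<forall>i<L. \<bar>h (Suc i) - h i\<bar> \<le> 1" and hL: "h L = 0" and hj: "h j \<ge> int n" and jL: "j \<le> L"
    and stQ: "st ` {0..L} \<subseteq> Q" and fQ: "finite Q" and cQ: "card Q = n"
  shows "\<exists>c e. j \<le> c \<and> c < e \<and> e \<le> L \<and> st c = st e \<and> h e < h c"
proof -
  have "\<exists>a b. a < b \<and> b \<le> L - j \<and> st (L - a) = st (L - b) \<and> h (L - a) < h (L - b)"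
  proof (rule up_cycle[of "L - j" "\<lambda>i. h (L - i)" n "\<lambda>i. st (L - i)" Q, OF _ _ _ _ fQ cQ])
    show "\<forall>i<L - j. \<bar>h (L - Suc i) - h (L - i)\<bar> \<le> 1"
    proof (intro allI impI)
      fix i assume "i < L - j"
      then have "L - i = Suc (L - Suc i)" "L - Suc i < L" by auto
      then show "\<bar>h (L - Suc i) - h (L - i)\<bar> \<le> 1" using step by (metis abs_minus_commute)
    qed
    show "h (L - 0) = 0" using hL by simp
    show "int n \<le> h (L - (L - j))" using hj jL by simp
    show "(\<lambda>i. st (L - i)) ` {0..L - j} \<subseteq> Q" using stQ by auto
  qed
  then obtain a b where "a < b" "b \<le> L - j" "st (L - a) = st (L - b)" "h (L - a) < h (L - b)" by blast
  then have "j \<le> L - b \<and> L - b < L - a \<and> L - a \<le> L \<and> st (L - b) = st (L - a) \<and> h (L - a) < h (L - b)"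
    using jL by auto
  then show ?thesis by blast
qed

lemma two_cycles:
  fixes h :: "nat \<Rightarrow> int" and st :: "nat \<Rightarrow> 'q"
  assumes step: "\<forall>i<L. \<bar>h (Suc i) - h i\<bar> \<le> 1" and h0: "h 0 = 0" and hL: "h L = 0"
    and hj: "\<bar>h j\<bar> \<ge> int n" and jL: "j \<le> L"
    and stQ: "st ` {0..L} \<subseteq> Q" and fQ: "finite Q" and cQ: "card Q = n"
  shows "\<exists>a b c e. a < b \<and> b \<le> c \<and> c < e \<and> e \<le> L \<and> st a = st b \<and> st c = st e
      \<and> (h b - h a) * (h e - h c) < 0"
proof -
  have main: "\<exists>a b c e. a < b \<and> b \<le> c \<and> c < e \<and> e \<le> L \<and> st a = st b \<and> st c = st e
      \<and> g a < g b \<and> g e < g c"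
    if gstep: "\<forall>i<L. \<bar>g (Suc i) - g i\<bar> \<le> 1" and g0: "g 0 = 0" and gL: "g L = 0" and gj: "g j \<ge> int n"
    for g :: "nat \<Rightarrow> int"
  proof -
    have s1: "\<forall>i<j. \<bar>g (Suc i) - g i\<bar> \<le> 1" using gstep jL by simp
    have s2: "st ` {0..j} \<subseteq> Q" using stQ jL by auto
    obtain a b where ab: "a < b" "b \<le> j" "st a = st b" "g a < g b"
      using up_cycle[OF s1 g0 gj s2 fQ cQ] by blast
    obtain c e where ce: "j \<le> c" "c < e" "e \<le> L" "st c = st e" "g e < g c"
      using down_cycle[OF gstep gL gj jL stQ fQ cQ] by blast
    have "b \<le> c" using ab ce by simp
    then show ?thesis using ab ce by blast
  qed
  show ?thesis
  proof (cases "h j \<ge> 0")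
    case True
    then have "h j \<ge> int n" using hj by simp
    then obtain a b c e where r: "a < b \<and> b \<le> c \<and> c < e \<and> e \<le> L \<and> st a = st b \<and> st c = st e
      \<and> h a < h b \<and> h e < h c" using main[OF step h0 hL] by blast
    then have "(h b - h a) * (h e - h c) < 0" by (simp add: mult_pos_neg)
    then show ?thesis using r by blast
  next
    case False
    have st': "\<forall>i<L. \<bar>(- h (Suc i)) - (- h i)\<bar> \<le> 1" using step by (simp add: abs_minus_commute)
    have "- h j \<ge> int n" using hj False by simp
    then obtain a b c e where r: "a < b \<and> b \<le> c \<and> c < e \<and> e \<le> L \<and> st a = st b \<and> st c = st e
      \<and> - h a < - h b \<and> - h e < - h c" using main[of "\<lambda>i. - h i", OF st'] h0 hL by auto
    then have "(h b - h a) * (h e - h c) < 0" by (simp add: mult_neg_pos)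
    then show ?thesis using r by blast
  qed
qed

fun walk :: "('q, 'a) trans set \<Rightarrow> 'q \<Rightarrow> ('q, 'a) trans list \<Rightarrow> 'q \<Rightarrow> bool" where
  "walk E p [] q = (p = q)"
| "walk E p (t # P) q = (t \<in> E \<and> src t = p \<and> walk E (tgt t) P q)"

fun endst :: "'q \<Rightarrow> ('q, 'a) trans list \<Rightarrow> 'q" where
  "endst p [] = p"
| "endst p (t # P) = endst (tgt t) P"

lemma walk_append: "walk E p (xs @ ys) r \<longleftrightarrow> (\<exists>q. walk E p xs q \<and> walk E q ys r)"
  by (induction xs arbitrary: p) auto

lemma walk_endst: "walk E p P q \<Longrightarrow> q = endst p P"
  by (induction P arbitrary: p) auto

lemma walk_hd: "walk E p P q \<Longrightarrow> P \<noteq> [] \<Longrightarrow> src (hd P) = p"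
  by (cases P) auto

lemma walk_last: "walk E p P q \<Longrightarrow> P \<noteq> [] \<Longrightarrow> tgt (last P) = q"
proof (induction P arbitrary: p)
  case Nil then show ?case by simp
next
  case (Cons t P) then show ?case by (cases P) auto
qed

lemma is_path_Cons: "is_path E (t # P) \<longleftrightarrow> t \<in> E \<and> is_path E P \<and> (P \<noteq> [] \<longrightarrow> tgt t = src (hd P))"
  unfolding is_path_def
  by (auto simp: nth_Cons' hd_conv_nth split: if_splits)

lemma is_path_walk: "is_path E P \<longleftrightarrow> (\<exists>p q. walk E p P q)"
proof (induction P)
  case Nil
  then show ?case by (auto simp: is_path_def)
next
  case (Cons t P)
  show ?case
  proof
    assume "is_path E (t # P)"
    then have h: "t \<in> E" "is_path E P" "P \<noteq> [] \<longrightarrow> tgt t = src (hd P)" by (auto simp: is_path_Cons)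
    then obtain p q where w: "walk E p P q" using Cons by blast
    show "\<exists>p q. walk E p (t # P) q"
    proof (cases "P = []")
      case True then show ?thesis using h by auto
    next
      case False
      then have "p = tgt t" using walk_hd[OF w] h by auto
      then show ?thesis using h w by auto
    qed
  next
    assume "\<exists>p q. walk E p (t # P) q"
    then obtain p q where w: "walk E p (t # P) q" by blast
    then have "t \<in> E" "walk E (tgt t) P q" by auto
    then show "is_path E (t # P)" using Cons walk_hd[of E "tgt t" P q] by (auto simp: is_path_Cons)
  qed
qed

lemma walk_take: assumes "walk E p P q" shows "walk E p (take i P) (endst p (take i P))"
proof -
  have "walk E p (take i P @ drop i P) q" using assms by simp
  then obtain q' where "walk E p (take i P) q'" unfolding walk_append by blast
  then show ?thesis using walk_endst by metis
qed

lemma walk_seg: assumes "walk E p P q" "a \<le> b"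
  shows "walk E (endst p (take a P)) (drop a (take b P)) (endst p (take b P))"
proof -
  have w: "walk E p (take b P) (endst p (take b P))" using walk_take[OF assms(1)] .
  have eq: "take a P @ drop a (take b P) = take b P" using assms(2)
    by (metis append_take_drop_id min.absorb1 take_take)
  have "walk E p (take a P @ drop a (take b P)) (endst p (take b P))" unfolding eq by (rule w)
  then obtain q' where q': "walk E p (take a P) q'" "walk E q' (drop a (take b P)) (endst p (take b P))"
    unfolding walk_append by blast
  have "q' = endst p (take a P)" using walk_endst[OF q'(1)] .
  then show ?thesis using q'(2) by simp
qed

lemma walk_Q: assumes "walk E p P q" "\<forall>t\<in>E. src t \<in> Q \<and> tgt t \<in> Q" "p \<in> Q"
  shows "q \<in> Q"
  using assms by (induction P arbitrary: p) auto

lemma dd_append[simp]: "dd (xs @ ys) = dd xs + dd ys"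
  by (simp add: dd_def)

lemma dd_Nil[simp]: "dd [] = 0"
  by (simp add: dd_def)

lemma dd_single: "\<bar>dd [t]\<bar> \<le> 1"
  by (simp add: dd_def split: option.splits)

lemma dd_step: "i < length P \<Longrightarrow> \<bar>dd (take (Suc i) P) - dd (take i P)\<bar> \<le> 1"
  by (simp add: take_Suc_conv_app_nth dd_single)

lemma dmax_ge: "i \<le> length P \<Longrightarrow> \<bar>dd (take i P)\<bar> \<le> dmax P"
  unfolding dmax_def by (rule Max_ge) auto

lemma dmax_ex: "\<exists>i \<le> length P. dmax P = \<bar>dd (take i P)\<bar>"
proof -
  have "dmax P \<in> (\<lambda>i. \<bar>dd (take i P)\<bar>) ` {0..length P}"
    unfolding dmax_def by (rule Max_in) auto
  then show ?thesis by auto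
qed

lemma seg_dd: assumes "a \<le> b" shows "dd (drop a (take b P)) = dd (take b P) - dd (take a P)"
proof -
  have eq: "take a P @ drop a (take b P) = take b P" using assms
    by (metis append_take_drop_id min.absorb1 take_take)
  have "dd (take b P) = dd (take a P) + dd (drop a (take b P))"
    by (subst eq[symmetric]) (rule dd_append)
  then show ?thesis by simp
qed


lemma two_to_three:
  assumes tr: "transducer Q \<Sigma> E I F" and cQ: "card Q = n" and n1: "n \<ge> 1"
    and comp: "computation E I P" and dm: "dmax P \<ge> int n" and d0: "dd P = 0"
  shows "\<exists>B C1 A C2 D. computation E I (B @ C1 @ A @ C2 @ D)
                  \<and> is_path E B \<and> is_cycle E C1 \<and> is_path E A \<and> is_cycle E C2 \<and> is_path E D
                  \<and> dd C1 * dd C2 < 0"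
proof -
  have fQ: "finite Q" and EQ: "\<forall>t\<in>E. src t \<in> Q \<and> tgt t \<in> Q" using tr unfolding transducer_def by blast+
  have pathP: "is_path E P" using comp unfolding computation_def by auto
  then obtain p q where w: "walk E p P q" unfolding is_path_walk by blast
  define L where "L = length P"
  obtain j where j: "j \<le> L" "dmax P = \<bar>dd (take j P)\<bar>" using dmax_ex unfolding L_def by blast
  have "P \<noteq> []"
  proof
    assume "P = []"
    then have "dmax P = 0" using j by (simp add: L_def)
    then show False using dm n1 by simp
  qed
  then have "hd P \<in> E" using pathP unfolding is_path_def by auto
  moreover have "src (hd P) = p" using walk_hd[OF w \<open>P \<noteq> []\<close>] .
  ultimately have pQ: "p \<in> Q" using EQ by auto
  define h where "h i = dd (take i P)" for i
  define st where "st i = endst p (take i P)" for i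
  have step: "\<forall>i<L. \<bar>h (Suc i) - h i\<bar> \<le> 1" unfolding h_def L_def using dd_step by blast
  have h0: "h 0 = 0" and hL: "h L = 0" using d0 by (auto simp: h_def L_def)
  have hj: "\<bar>h j\<bar> \<ge> int n" using j dm by (simp add: h_def)
  have stQ: "st ` {0..L} \<subseteq> Q" unfolding st_def using walk_Q[OF walk_take[OF w] EQ pQ] by blast
  obtain a b c e where abce: "a < b" "b \<le> c" "c < e" "e \<le> L" "st a = st b" "st c = st e"
      "(h b - h a) * (h e - h c) < 0"
    using two_cycles[OF step h0 hL hj j(1) stQ fQ cQ] by blast
  define B where "B = take a P"
  define C1 where "C1 = drop a (take b P)"
  define A where "A = drop b (take c P)"
  define C2 where "C2 = drop c (take e P)"
  define D where "D = drop e (take L P)"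
  have sg: "take y P = take x P @ drop x (take y P)" if "x \<le> y" for x y
    using that by (metis append_take_drop_id min.absorb1 take_take)
  have f1: "take e P @ D = P" unfolding D_def L_def using sg[of e "length P"] abce by (simp add: L_def)
  have f2: "take c P @ C2 = take e P" unfolding C2_def using sg[of c e] abce by simp
  have f3: "take b P @ A = take c P" unfolding A_def using sg[of b c] abce by simp
  have f4: "B @ C1 = take b P" unfolding B_def C1_def using sg[of a b] abce by simp
  have eq: "B @ C1 @ A @ C2 @ D = P"
    by (simp only: append_assoc[symmetric] f4 f3 f2 f1)
  have wB: "walk E p B (st a)" unfolding B_def st_def using walk_take[OF w] .
  have wseg: "walk E (st x) (drop x (take y P)) (st y)" if "x \<le> y" for x y
    unfolding st_def using walk_seg[OF w that] .
  have cyc: "is_cycle E (drop x (take y P))" if "x < y" "y \<le> L" "st x = st y" for x y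
  proof -
    have ne: "drop x (take y P) \<noteq> []" using that by (simp add: L_def)
    have wx: "walk E (st x) (drop x (take y P)) (st y)" using wseg[of x y] that(1) by simp
    have "is_path E (drop x (take y P))" unfolding is_path_walk using wx by blast
    moreover have "src (hd (drop x (take y P))) = st x" using walk_hd[OF wx ne] .
    moreover have "tgt (last (drop x (take y P))) = st y" using walk_last[OF wx ne] .
    ultimately show ?thesis unfolding is_cycle_def using ne that(3) by simp
  qed
  have "is_cycle E C1" unfolding C1_def using cyc abce by auto
  moreover have "is_cycle E C2" unfolding C2_def using cyc abce by auto
  moreover have "is_path E A" unfolding A_def is_path_walk using wseg[of b c] abce by blast
  moreover have "is_path E D" unfolding D_def is_path_walk using wseg[of e L] abce by blast
  moreover have "is_path E B" using wB unfolding is_path_walk by blast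
  moreover have "dd C1 * dd C2 < 0"
  proof -
    have "dd C1 = h b - h a" unfolding C1_def h_def using seg_dd[of a b] abce by simp
    moreover have "dd C2 = h e - h c" unfolding C2_def h_def using seg_dd[of c e] abce by simp
    ultimately show ?thesis using abce(7) by simp
  qed
  moreover have "computation E I (B @ C1 @ A @ C2 @ D)" using eq comp by simp
  ultimately have "computation E I (B @ C1 @ A @ C2 @ D)
                  \<and> is_path E B \<and> is_cycle E C1 \<and> is_path E A \<and> is_cycle E C2 \<and> is_path E D
                  \<and> dd C1 * dd C2 < 0" (is "?R") by (intro conjI)
  show ?thesis
    apply (rule exI[where x=B], rule exI[where x=C1], rule exI[where x=A], rule exI[where x=C2], rule exI[where x=D])
    by (rule \<open>?R\<close>)
qed


lemma pump_arith:
  fixes b a c1 c2 :: int and m N M :: nat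
  assumes "c1 * c2 < 0" and N: "N = m + nat \<bar>b\<bar> + nat \<bar>a\<bar>"
    and M: "M = nat \<bar>b + int N * c1 + a\<bar> + 1"
  shows "\<bar>b + int N * c1 + a\<bar> \<ge> int m \<and>
    ((b + int N * c1 + a \<le> 0 \<and> 0 \<le> b + int N * c1 + a + int M * c2)
     \<or> (b + int N * c1 + a + int M * c2 \<le> 0 \<and> 0 \<le> b + int N * c1 + a))"
proof -
  define x where "x = b + int N * c1 + a"
  have iN: "int N = int m + \<bar>b\<bar> + \<bar>a\<bar>" using N by simp
  have iM: "int M = \<bar>x\<bar> + 1" using M unfolding x_def by simp
  have ab: "b \<ge> - \<bar>b\<bar>" "b \<le> \<bar>b\<bar>" "a \<ge> - \<bar>a\<bar>" "a \<le> \<bar>a\<bar>" "x \<le> \<bar>x\<bar>" "- x \<le> \<bar>x\<bar>"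
    by auto
  have "\<bar>x\<bar> \<ge> int m \<and> ((x \<le> 0 \<and> 0 \<le> x + int M * c2) \<or> (x + int M * c2 \<le> 0 \<and> 0 \<le> x))"
  proof (cases "c1 > 0")
    case True
    then have c2: "c2 < 0" using assms(1) by (simp add: mult_less_0_iff)
    have h1: "int N * 1 \<le> int N * c1" using True by (intro mult_left_mono) auto
    have h2: "int M * c2 \<le> int M * (-1)" using c2 by (intro mult_left_mono) auto
    have "x \<ge> int m" using h1 iN ab unfolding x_def by linarith
    moreover have "x + int M * c2 \<le> 0" using h2 iM ab by linarith
    ultimately show ?thesis using ab by linarith
  next
    case False
    then have c1: "c1 < 0" and c2: "c2 > 0" using assms(1) by (auto simp: mult_less_0_iff)
    have h1: "int N * c1 \<le> int N * (-1)" using c1 by (intro mult_left_mono) auto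
    have h2: "int M * 1 \<le> int M * c2" using c2 by (intro mult_left_mono) auto
    have "x \<le> - int m" using h1 iN ab unfolding x_def by linarith
    moreover have "x + int M * c2 \<ge> 0" using h2 iM ab by linarith
    ultimately show ?thesis using ab by linarith
  qed
  then show ?thesis unfolding x_def .
qed

lemma ivt0:
  fixes h :: "nat \<Rightarrow> int"
  assumes st: "\<forall>i. a \<le> i \<and> i < b \<longrightarrow> \<bar>h (Suc i) - h i\<bar> \<le> 1" and ab: "a \<le> b"
    and sg: "(h a \<le> 0 \<and> 0 \<le> h b) \<or> (h b \<le> 0 \<and> 0 \<le> h a)"
  shows "\<exists>i. a \<le> i \<and> i \<le> b \<and> h i = 0"
proof (cases "h a \<le> 0 \<and> 0 \<le> h b")
  case True
  then show ?thesis using nat_intermed_int_val[OF st ab, of 0] by auto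
next
  case False
  have st': "\<forall>i. a \<le> i \<and> i < b \<longrightarrow> \<bar>(- h (Suc i)) - (- h i)\<bar> \<le> 1" using st by (simp add: abs_minus_commute)
  have "- h a \<le> 0" "0 \<le> - h b" using False sg by auto
  then show ?thesis using nat_intermed_int_val[OF st' ab, of 0] by auto
qed

lemma walk_pow: "walk E q C q \<Longrightarrow> walk E q (concat (replicate N C)) q"
  by (induction N) (auto simp: walk_append)

lemma dd_pow: "dd (concat (replicate N C)) = int N * dd C"
  by (induction N) (auto simp: algebra_simps)

lemma pump:
  assumes comp: "computation E I (B @ C1 @ A @ C2 @ D)"
    and cyc1: "is_cycle E C1" and cyc2: "is_cycle E C2" and sgn: "dd C1 * dd C2 < 0"
  shows "\<exists>P. computation E I P \<and> dmax P \<ge> int m \<and> dd P = 0"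
proof -
  have ne1: "C1 \<noteq> []" and ne2: "C2 \<noteq> []" using cyc1 cyc2 unfolding is_cycle_def by auto
  have path0: "is_path E (B @ C1 @ A @ C2 @ D)" and init: "src (hd (B @ C1 @ A @ C2 @ D)) \<in> I"
    using comp ne1 unfolding computation_def by auto
  obtain p r where w0: "walk E p (B @ C1 @ A @ C2 @ D) r" using path0 unfolding is_path_walk by blast
  have pI: "p \<in> I" using walk_hd[OF w0] ne1 init by simp
  obtain q1 where wB: "walk E p B q1" and w1: "walk E q1 (C1 @ A @ C2 @ D) r"
    using w0 unfolding walk_append by blast
  obtain q2 where wC1: "walk E q1 C1 q2" and w2: "walk E q2 (A @ C2 @ D) r"
    using w1 unfolding walk_append by blast
  obtain q3 where wA: "walk E q2 A q3" and w3: "walk E q3 (C2 @ D) r"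
    using w2 unfolding walk_append by blast
  obtain q4 where wC2: "walk E q3 C2 q4"
    using w3 unfolding walk_append by blast
  have "q1 = q2" using walk_hd[OF wC1 ne1] walk_last[OF wC1 ne1] cyc1 unfolding is_cycle_def by simp
  have "q3 = q4" using walk_hd[OF wC2 ne2] walk_last[OF wC2 ne2] cyc2 unfolding is_cycle_def by simp
  define N where "N = m + nat \<bar>dd B\<bar> + nat \<bar>dd A\<bar>"
  define X where "X = B @ concat (replicate N C1) @ A"
  define M where "M = nat \<bar>dd B + int N * dd C1 + dd A\<bar> + 1"
  define P' where "P' = X @ concat (replicate M C2)"
  have wX: "walk E p X q3" unfolding X_def walk_append
    using wB walk_pow[of E q1 C1 N] wC1 wA \<open>q1 = q2\<close> by auto
  have wP: "walk E p P' q3" unfolding P'_def walk_append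
    using wX walk_pow[of E q3 C2 M] wC2 \<open>q3 = q4\<close> by auto
  have ddX: "dd X = dd B + int N * dd C1 + dd A" unfolding X_def by (simp add: dd_pow)
  have ddP: "dd P' = dd X + int M * dd C2" unfolding P'_def by (simp add: dd_pow)
  have ar: "\<bar>dd X\<bar> \<ge> int m \<and> ((dd X \<le> 0 \<and> 0 \<le> dd P') \<or> (dd P' \<le> 0 \<and> 0 \<le> dd X))"
    using pump_arith[OF sgn N_def M_def] unfolding ddP ddX by simp
  define h where "h i = dd (take i P')" for i
  have lX: "length X \<le> length P'" unfolding P'_def by simp
  have hX: "h (length X) = dd X" unfolding h_def P'_def by simp
  have hP: "h (length P') = dd P'" unfolding h_def by simp
  have st: "\<forall>i. length X \<le> i \<and> i < length P' \<longrightarrow> \<bar>h (Suc i) - h i\<bar> \<le> 1"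
    unfolding h_def using dd_step by blast
  obtain i where i: "length X \<le> i" "i \<le> length P'" "h i = 0"
    using ivt0[OF st lX] ar hX hP by auto
  define Qs where "Qs = take i P'"
  have wQ: "walk E p Qs (endst p Qs)" unfolding Qs_def using walk_take[OF wP] .
  have "computation E I Qs" unfolding computation_def
    using wQ walk_hd[OF wQ] pI unfolding is_path_walk by blast
  moreover have "dd Qs = 0" using i unfolding Qs_def h_def by simp
  moreover have "dmax Qs \<ge> int m"
  proof -
    have "take (length X) Qs = X" unfolding Qs_def P'_def using i by (simp add: min_def)
    moreover have "length X \<le> length Qs" unfolding Qs_def using i by simp
    ultimately have "\<bar>dd X\<bar> \<le> dmax Qs" using dmax_ge[of "length X" Qs] by simp
    then show ?thesis using ar by simp
  qed
  ultimately show ?thesis by blast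
qed


theorem proposition3:
  fixes Q :: "'q set" and \<Sigma> :: "'a set" and E :: "('q, 'a) trans set"
    and I F :: "'q set" and n :: nat
  assumes "transducer Q \<Sigma> E I F"
    and "card Q = n" and "n \<ge> 1"
  shows "(\<not> zero_avoiding E I
           \<longleftrightarrow> (\<exists>P. computation E I P \<and> dmax P \<ge> int n \<and> dd P = 0))
       \<and> ((\<exists>P. computation E I P \<and> dmax P \<ge> int n \<and> dd P = 0)
           \<longleftrightarrow> (\<exists>B C1 A C2 D. computation E I (B @ C1 @ A @ C2 @ D)
                  \<and> is_path E B \<and> is_cycle E C1 \<and> is_path E A \<and> is_cycle E C2 \<and> is_path E D
                  \<and> dd C1 * dd C2 < 0))"
proof -
  let ?Z = "\<exists>P. computation E I P \<and> dmax P \<ge> int n \<and> dd P = 0"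
  let ?C = "\<exists>B C1 A C2 D. computation E I (B @ C1 @ A @ C2 @ D)
                  \<and> is_path E B \<and> is_cycle E C1 \<and> is_path E A \<and> is_cycle E C2 \<and> is_path E D
                  \<and> dd C1 * dd C2 < 0"
  have ZC: "?Z \<Longrightarrow> ?C"
  proof -
    assume ?Z
    then obtain P where "computation E I P" "dmax P \<ge> int n" "dd P = 0" by blast
    then show ?C using two_to_three[OF assms] by blast
  qed
  have CP: "\<exists>P. computation E I P \<and> dmax P \<ge> int m \<and> dd P = 0" if ?C for m
  proof -
    from that obtain B C1 A C2 D where "computation E I (B @ C1 @ A @ C2 @ D)"
      "is_cycle E C1" "is_cycle E C2" "dd C1 * dd C2 < 0" by blast
    then show ?thesis using pump by blast
  qed
  have NZ: "?Z" if "\<not> zero_avoiding E I"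
  proof -
    from that have "\<not> zero_avoiding_with_bound E I n" unfolding zero_avoiding_def by blast
    then obtain P where "computation E I P" "dmax P > int n" "dd P = 0"
      unfolding zero_avoiding_with_bound_def by blast
    then show ?Z by (intro exI[where x=P]) auto
  qed
  have ZN: "\<not> zero_avoiding E I" if z: ?Z
  proof
    assume "zero_avoiding E I"
    then obtain k where k: "zero_avoiding_with_bound E I k" unfolding zero_avoiding_def by blast
    obtain P where P: "computation E I P" "dmax P \<ge> int (Suc k)" "dd P = 0"
      using CP[OF ZC[OF z], of "Suc k"] by blast
    then show False using k unfolding zero_avoiding_with_bound_def by force
  qed
  show ?thesis using ZC CP NZ ZN by blast
qed

end
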